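(* Let $\Bbbk$ be a field of characteristic $0$, $n\ge2$, and let $(A,\mu)$ be an $n$-ary totally associative algebra over $\Bbbk$. Then $(A,[\cdot,\ldots,\cdot])$, where $[\cdot,\ldots,\cdot]$ is the $n$-commutator bracket of $\mu$, is an $n$-ary Nambu algebra, i.e. for all $x_1,\ldots,x_{n-1},y_1,\ldots,y_n\in A$, $[x_1,\ldots,x_{n-1},[y_1,\ldots,y_n]]=\sum_{i=1}^n[y_1,\ldots,y_{i-1},[x_1,\ldots,x_{n-1},y_i],y_{i+1},\ldots,y_n]$.
   Context: An $n$-ary algebra $(A,\mu)$ is a vector space with an $n$-linear map $\mu$, written $\mu(a_1,\ldots,a_n)=(a_1\cdots a_n)$. It is totally associative if for every $i\in\{1,\ldots,n-1\}$ and all $a_1,\ldots,a_{2n-1}$: $(a_1,\ldots,a_{i-1},(a_i\cdots a_{i+n-1}),a_{i+n},\ldots,a_{2n-1})=(a_1,\ldots,a_i,(a_{i+1}\cdots a_{i+n}),a_{i+n+1},\ldots,a_{2n-1})$. $n$-commutator words: in non-commuting variables $X_1,X_2,\ldots$, set $W_2=\{X_1X_2,-X_2X_1\}$ and for $n>2$, $W_n=\{zX_n,\,-X_nz : z\in W_{n-1}\}$. A word $w=\pm X_{i_1}\cdots X_{i_n}\in W_n$ acts by $w(a_1,\ldots,a_n)=\pm a_{i_1}\otimes\cdots\otimes a_{i_n}$. The $n$-commutator bracket is $[a_1,\ldots,a_n]=\sum_{w\in W_n}\mu(w(a_1,\ldots,a_n))$. *)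

theory Defs
  imports Main "HOL.Vector_Spaces"
begin

text \<open>n-ary operations are modelled as functions on lists; only lists of length n matter.\<close>

definition multilinear ::
  "('k::field \<Rightarrow> 'a::ab_group_add \<Rightarrow> 'a) \<Rightarrow> nat \<Rightarrow> ('a list \<Rightarrow> 'a) \<Rightarrow> bool" where
  "multilinear scale n mu \<longleftrightarrow>
     (\<forall>as i x y c. length as = n \<and> i < n \<longrightarrow>
        mu (as[i := x + y]) = mu (as[i := x]) + mu (as[i := y]) \<and>
        mu (as[i := scale c x]) = scale c (mu (as[i := x])))"

text \<open>Total associativity; position p (0-based) corresponds to i = p+1 in the paper.\<close>
definition totally_associative :: "nat \<Rightarrow> ('a list \<Rightarrow> 'a) \<Rightarrow> bool" where
  "totally_associative n mu \<longleftrightarrow>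
     (\<forall>as p. length as = 2 * n - 1 \<and> p + 2 \<le> n \<longrightarrow>
        mu (take p as @ [mu (take n (drop p as))] @ drop (p + n) as) =
        mu (take (Suc p) as @ [mu (take n (drop (Suc p) as))] @ drop (Suc p + n) as))"

text \<open>n-commutator words: pairs (sign, list of 1-based variable indices).
  W_2 = {X1 X2, - X2 X1}, W_n = {z X_n, - X_n z : z in W_(n-1)}.\<close>
fun comm_words :: "nat \<Rightarrow> (int \<times> nat list) list" where
  "comm_words 0 = []"
| "comm_words (Suc 0) = []"
| "comm_words (Suc (Suc 0)) = [(1, [1, 2]), (-1, [2, 1])]"
| "comm_words (Suc (Suc (Suc m))) =
     concat (map (\<lambda>(s, z). [(s, z @ [Suc (Suc (Suc m))]), (- s, Suc (Suc (Suc m)) # z)])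
                 (comm_words (Suc (Suc m))))"

definition n_commutator ::
  "('k::field \<Rightarrow> 'a::ab_group_add \<Rightarrow> 'a) \<Rightarrow> nat \<Rightarrow> ('a list \<Rightarrow> 'a) \<Rightarrow> 'a list \<Rightarrow> 'a" where
  "n_commutator scale n mu as =
     sum_list (map (\<lambda>(s, w). scale (of_int s) (mu (map (\<lambda>j. as ! (j - 1)) w))) (comm_words n))"

definition nambu :: "nat \<Rightarrow> ('a::ab_group_add list \<Rightarrow> 'a) \<Rightarrow> bool" where
  "nambu n br \<longleftrightarrow>
     (\<forall>xs ys. length xs = n - 1 \<and> length ys = n \<longrightarrow>
        br (xs @ [br ys]) = (\<Sum>i<n. br (ys[i := br (xs @ [ys ! i])])))"

end

theory Submission
  imports Defs "HOL-Library.Multiset"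
begin


type_synonym 'b fsum = "(bool \<times> 'b list) list"

definition fev :: "('b list \<Rightarrow> 'a::ab_group_add) \<Rightarrow> 'b fsum \<Rightarrow> 'a" where
  "fev K F = sum_list (map (\<lambda>(s,w). if s then K w else - K w) F)"
definition fsingle :: "'b \<Rightarrow> 'b fsum" where "fsingle b = [(True,[b])]"
definition fone :: "'b fsum" where "fone = [(True,[])]"
definition fneg :: "'b fsum \<Rightarrow> 'b fsum" where "fneg F = map (\<lambda>(s,w). (\<not>s, w)) F"
definition fmult :: "'b fsum \<Rightarrow> 'b fsum \<Rightarrow> 'b fsum" where
  "fmult F G = concat (map (\<lambda>(s,v). map (\<lambda>(t,w). (s=t, v@w)) G) F)"
definition fcomm :: "'b fsum \<Rightarrow> 'b fsum \<Rightarrow> 'b fsum" where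
  "fcomm F G = fmult F G @ fneg (fmult G F)"
definition fCl :: "'b fsum list \<Rightarrow> 'b fsum" where "fCl Ls = foldl fcomm (hd Ls) (tl Ls)"

lemma fev_Nil[simp]: "fev K [] = 0" by (simp add: fev_def)
lemma fev_Cons[simp]: "fev K ((s,w)#F) = (if s then K w else - K w) + fev K F" by (simp add: fev_def)
lemma fev_append[simp]: "fev K (F @ G) = fev K F + fev K G" by (simp add: fev_def)
lemma fev_neg[simp]: "fev K (fneg F) = - fev K F"
  by (induction F) (auto simp: fneg_def)
lemma fev_single[simp]: "fev K (fsingle b) = K [b]" by (simp add: fsingle_def)
lemma fev_one[simp]: "fev K fone = K []" by (simp add: fone_def)
lemma fev_add_fun: "fev (\<lambda>w. f w + g w) F = fev f F + fev g F"
  by (induction F) (auto simp: algebra_simps)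
lemma fev_minus_fun: "fev (\<lambda>w. - f w) F = - fev f F"
  by (induction F) (auto simp: algebra_simps)
lemma fev_diff_fun: "fev (\<lambda>w. f w - g w) F = fev f F - fev g F"
  by (induction F) (auto simp: algebra_simps)
lemma fev_zero_fun: "fev (\<lambda>w. 0) F = 0"
  by (induction F) auto
lemma fev_concat: "fev K (concat Fs) = sum_list (map (fev K) Fs)"
  by (induction Fs) auto
lemma fev_cong: "(\<And>s w. (s,w) \<in> set F \<Longrightarrow> K1 w = K2 w) \<Longrightarrow> fev K1 F = fev K2 F"
proof (induction F)
  case (Cons p F) then show ?case by (cases p) (metis fev_Cons list.set_intros)
qed simp

lemma fev_mult_aux: "fev K (map (\<lambda>(t,w). (s=t, v@w)) G) = (if s then fev (\<lambda>w. K (v@w)) G else - fev (\<lambda>w. K (v@w)) G)"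
  by (induction G) auto

lemma fev_mult: "fev K (fmult F G) = fev (\<lambda>v. fev (\<lambda>w. K (v@w)) G) F"
  by (induction F) (auto simp: fmult_def fev_mult_aux fev_concat)

lemma fev_swap: "fev (\<lambda>v. fev (\<lambda>w. K v w) G) F = fev (\<lambda>w. fev (\<lambda>v. K v w) F) G"
  by (induction F) (auto simp: fev_add_fun fev_minus_fun fev_zero_fun)

lemma fev_comm: "fev K (fcomm F G) = fev (\<lambda>v. fev (\<lambda>w. K (v@w)) G - fev (\<lambda>w. K (w@v)) G) F"
  unfolding fcomm_def by (simp add: fev_mult fev_diff_fun fev_swap[of _ G F])

lemma jacobi: "fev K (fcomm X (fcomm A B)) = fev K (fcomm (fcomm X A) B) + fev K (fcomm A (fcomm X B))"
  by (simp add: fev_comm fev_diff_fun fev_add_fun fev_minus_fun fev_swap[of _ X A] algebra_simps)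



lemma fCl_single[simp]: "fCl [f] = f" by (simp add: fCl_def)
lemma fCl_snoc: "fs \<noteq> [] \<Longrightarrow> fCl (fs@[g]) = fcomm (fCl fs) g"
  by (cases fs) (auto simp: fCl_def)

lemma deriv: "Ys \<noteq> [] \<Longrightarrow> fev K (fcomm X (fCl Ys)) = (\<Sum>i<length Ys. fev K (fCl (Ys[i := fcomm X (Ys!i)])))"
proof (induction Ys arbitrary: K rule: rev_induct)
  case Nil then show ?case by simp
next
  case (snoc y Ys)
  show ?case
  proof (cases "Ys = []")
    case True then show ?thesis by simp
  next
    case False
    define A where "A = fCl Ys"
    define K' where "K' = (\<lambda>v. fev (\<lambda>w. K (v@w)) y - fev (\<lambda>w. K (w@v)) y)"
    have 1: "fev K (fcomm X (fCl (Ys@[y]))) = fev K (fcomm (fcomm X A) y) + fev K (fcomm A (fcomm X y))"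
      using False unfolding A_def by (simp add: fCl_snoc jacobi[of K X "fCl Ys" y])
    have 2: "fev K (fcomm (fcomm X A) y) = (\<Sum>i<length Ys. fev K (fCl ((Ys@[y])[i := fcomm X ((Ys@[y])!i)])))"
    proof -
      have "fev K (fcomm (fcomm X A) y) = fev K' (fcomm X A)" by (simp add: fev_comm K'_def)
      also have "\<dots> = (\<Sum>i<length Ys. fev K' (fCl (Ys[i := fcomm X (Ys!i)])))"
        using snoc.IH[OF False] A_def by simp
      also have "\<dots> = (\<Sum>i<length Ys. fev K (fCl ((Ys@[y])[i := fcomm X ((Ys@[y])!i)])))"
      proof (rule sum.cong)
        fix i assume "i \<in> {..<length Ys}"
        then have i: "i < length Ys" by simp
        have "(Ys@[y])[i := fcomm X ((Ys@[y])!i)] = Ys[i := fcomm X (Ys!i)] @ [y]"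
          using i by (simp add: list_update_append nth_append)
        moreover have "Ys[i := fcomm X (Ys!i)] \<noteq> []" using False by simp
        ultimately show "fev K' (fCl (Ys[i := fcomm X (Ys!i)])) = fev K (fCl ((Ys@[y])[i := fcomm X ((Ys@[y])!i)]))"
          by (simp add: fCl_snoc fev_comm K'_def)
      qed simp
      finally show ?thesis .
    qed
    have 3: "fev K (fcomm A (fcomm X y)) = fev K (fCl ((Ys@[y])[length Ys := fcomm X ((Ys@[y])!length Ys)]))"
      using False by (simp add: fCl_snoc A_def)
    show ?thesis using 1 2 3 by simp
  qed
qed



definition fprod :: "'b fsum list \<Rightarrow> 'b fsum" where "fprod Fs = foldr fmult Fs fone"
definition fsgn :: "bool \<Rightarrow> 'b fsum \<Rightarrow> 'b fsum" where "fsgn s G = (if s then G else fneg G)"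
definition fhom :: "('b \<Rightarrow> 'c fsum) \<Rightarrow> 'b fsum \<Rightarrow> 'c fsum" where
  "fhom \<phi> F = concat (map (\<lambda>(s,w). fsgn s (fprod (map \<phi> w))) F)"

lemma fev_fsgn[simp]: "fev K (fsgn s G) = (if s then fev K G else - fev K G)"
  by (simp add: fsgn_def)

lemma fev_hom: "fev K (fhom \<phi> F) = fev (\<lambda>w. fev K (fprod (map \<phi> w))) F"
  by (induction F) (auto simp: fhom_def)

lemma fprod_Nil[simp]: "fprod [] = fone" by (simp add: fprod_def)
lemma fprod_Cons[simp]: "fprod (x#xs) = fmult x (fprod xs)" by (simp add: fprod_def)

lemma fprod_append: "fev K (fprod (xs@ys)) = fev K (fmult (fprod xs) (fprod ys))"
proof (induction xs arbitrary: K)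
  case Nil then show ?case by (simp add: fev_mult fone_def)
next
  case (Cons x xs) then show ?case by (simp add: fev_mult)
qed

lemma hom_append: "fev K (fhom \<phi> (F@G)) = fev K (fhom \<phi> F) + fev K (fhom \<phi> G)"
  by (simp add: fev_hom)
lemma hom_neg: "fev K (fhom \<phi> (fneg F)) = - fev K (fhom \<phi> F)"
  by (simp add: fev_hom)

lemma hom_mult: "fev K (fhom \<phi> (fmult F G)) = fev K (fmult (fhom \<phi> F) (fhom \<phi> G))"
proof -
  have "fev K (fhom \<phi> (fmult F G)) = fev (\<lambda>v. fev (\<lambda>w. fev (\<lambda>v'. fev (\<lambda>w'. K (v'@w')) (fprod (map \<phi> w))) (fprod (map \<phi> v))) G) F"
    by (simp add: fev_hom fev_mult fprod_append)
  also have "\<dots> = fev (\<lambda>v. fev (\<lambda>v'. fev (\<lambda>w. fev (\<lambda>w'. K (v'@w')) (fprod (map \<phi> w))) G) (fprod (map \<phi> v))) F"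
    by (rule arg_cong[where f="\<lambda>h. fev h F"], rule ext, rule fev_swap[symmetric])
  also have "\<dots> = fev K (fmult (fhom \<phi> F) (fhom \<phi> G))"
    by (simp add: fev_mult fev_hom)
  finally show ?thesis .
qed

lemma hom_comm: "fev K (fhom \<phi> (fcomm F G)) = fev K (fcomm (fhom \<phi> F) (fhom \<phi> G))"
  unfolding fcomm_def by (simp add: hom_append hom_neg hom_mult)

lemma hom_Cl: "Ls \<noteq> [] \<Longrightarrow> fev K (fhom \<phi> (fCl Ls)) = fev K (fCl (map (fhom \<phi>) Ls))"
proof (induction Ls arbitrary: K rule: rev_induct)
  case (snoc g Ls)
  show ?case
  proof (cases "Ls = []")
    case True then show ?thesis by simp
  next
    case False
    then show ?thesis using snoc.IH[OF False] by (simp add: fCl_snoc hom_comm fev_comm)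
  qed
qed simp

lemma Cl_cong:
  fixes K :: "'b list \<Rightarrow> 'a::ab_group_add"
  assumes "length Ls = length Ls'" "\<And>i (K'::'b list \<Rightarrow> 'a). i < length Ls \<Longrightarrow> fev K' (Ls!i) = fev K' (Ls'!i)"
  shows "fev K (fCl Ls) = fev K (fCl Ls')"
using assms proof (induction Ls arbitrary: Ls' K rule: rev_induct)
  case Nil then show ?case by simp
next
  case (snoc g Ls)
  obtain Ms g' where Ls': "Ls' = Ms @ [g']" using snoc.prems(1) by (cases Ls' rule: rev_cases) auto
  have len: "length Ms = length Ls" using snoc.prems(1) Ls' by simp
  have gg: "fev K g = fev K g'" for K :: "'b list \<Rightarrow> 'a"
  proof -
    have "fev K ((Ls@[g])!length Ls) = fev K (Ls'!length Ls)" using snoc.prems(2)[of "length Ls" K] by simp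
    then show ?thesis using Ls' len by (simp add: nth_append)
  qed
  show ?case
  proof (cases "Ls = []")
    case True then show ?thesis using Ls' len gg by simp
  next
    case False
    have IH: "fev K (fCl Ls) = fev K (fCl Ms)" for K :: "'b list \<Rightarrow> 'a"
    proof (rule snoc.IH)
      show "length Ls = length Ms" using len by simp
      fix i and K' :: "'b list \<Rightarrow> 'a" assume "i < length Ls"
      then show "fev K' (Ls!i) = fev K' (Ms!i)" using snoc.prems(2)[of i K'] Ls' len by (simp add: nth_append)
    qed
    have "Ms \<noteq> []" using False len by auto
    then show ?thesis using False Ls' IH gg by (simp add: fCl_snoc fev_comm)
  qed
qed

lemma hom_single: "fev K (fhom \<phi> (fsingle b)) = fev K (\<phi> b)"
  by (simp add: fev_hom fev_mult fone_def)

lemma fprod_singles: "fev K (fprod (map fsingle ws)) = K ws"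
  by (induction ws arbitrary: K) (simp_all add: fev_mult fsingle_def fone_def)

lemma comm_single_set: "(s,w) \<in> set (fcomm F (fsingle b)) \<Longrightarrow> \<exists>s' v. (s',v) \<in> set F \<and> (w = v@[b] \<or> w = b#v)"
  unfolding fcomm_def fmult_def fneg_def fsingle_def by auto

lemma Cl_mset: "bs \<noteq> [] \<Longrightarrow> (s,w) \<in> set (fCl (map fsingle bs)) \<Longrightarrow> mset w = mset bs"
proof (induction bs arbitrary: s w rule: rev_induct)
  case (snoc b bs)
  show ?case
  proof (cases "bs = []")
    case True then show ?thesis using snoc.prems by (simp add: fsingle_def)
  next
    case False
    then have "(s,w) \<in> set (fcomm (fCl (map fsingle bs)) (fsingle b))" using snoc.prems by (simp add: fCl_snoc)
    from comm_single_set[OF this] obtain s' v where sv: "(s',v) \<in> set (fCl (map fsingle bs))" and w: "w = v@[b] \<or> w = b#v"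
      by blast
    have "mset v = mset bs" by (rule snoc.IH[OF False sv])
    then show ?thesis using w by auto
  qed
qed simp



lemma cw_range: "(s,w) \<in> set (comm_words m) \<Longrightarrow> set w \<subseteq> {1..m}"
proof (induction m arbitrary: s w rule: comm_words.induct)
  case (4 k)
  then show ?case by (fastforce split: prod.splits)
qed auto

lemma sum_concat_pairs: "sum_list (map g (concat (map (\<lambda>(s,z). [f1 s z, f2 s z]) L))) = sum_list (map (\<lambda>(s,z). g (f1 s z) + g (f2 s z)) L)"
  by (induction L) (auto simp: add_ac)

lemma sum_list_diff_prod: "sum_list (map (\<lambda>(s,z). f s z - g s z) L) = sum_list (map (\<lambda>(s,z). f s z) L) - sum_list (map (\<lambda>(s,z). (g s z :: 'a::ab_group_add)) L)"
  by (induction L) (auto simp: algebra_simps)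

lemma link:
  assumes vs: "vector_space scale"
  shows "2 \<le> m \<Longrightarrow> length as = m \<Longrightarrow>
    sum_list (map (\<lambda>(s,w). scale (of_int s) (K (map (\<lambda>j. as!(j-1)) w))) (comm_words m)) = fev K (fCl (map fsingle as))"
proof (induction m arbitrary: as K rule: nat_induct_at_least)
  case base
  then obtain a b where "as = [a,b]"
    by (metis One_nat_def Suc_1 length_0_conv length_Suc_conv)
  have mi: "module scale" using vs module_iff_vector_space by blast
  from \<open>as = [a,b]\<close> show ?case
    by (simp add: module.scale_minus_left[OF mi] module.scale_one[OF mi] numeral_2_eq_2 fcomm_def fmult_def fneg_def fsingle_def fCl_def)
next
  case (Suc m)
  obtain bs a where as: "as = bs @ [a]" using Suc.prems by (cases as rule: rev_cases) auto
  have lbs: "length bs = m" using Suc.prems as by simp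
  obtain k where k: "m = Suc (Suc k)" using Suc.hyps by (metis add_2_eq_Suc le_iff_add)
  have mi: "module scale" using vs module_iff_vector_space by blast
  define mp where "mp = (\<lambda>z. map (\<lambda>j. bs!(j-1)) z)"
  have eq: "map (\<lambda>j. (bs@[a])!(j-1)) z = mp z" if "(s,z) \<in> set (comm_words m)" for s z
  proof -
    have "set z \<subseteq> {1..m}" using cw_range that by blast
    then show ?thesis unfolding mp_def using lbs by (intro map_cong refl) (force simp: nth_append)
  qed
  have "sum_list (map (\<lambda>(s,w). scale (of_int s) (K (map (\<lambda>j. as!(j-1)) w))) (comm_words (Suc m)))
     = sum_list (map (\<lambda>(s,z). scale (of_int s) (K (map (\<lambda>j. as!(j-1)) (z @ [Suc m])))
          + scale (of_int (-s)) (K (map (\<lambda>j. as!(j-1)) (Suc m # z)))) (comm_words m))"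
    unfolding k by (simp only: comm_words.simps sum_concat_pairs) (simp add: case_prod_beta)
  also have "\<dots> = sum_list (map (\<lambda>(s,z). scale (of_int s) (K (mp z @ [a])) - scale (of_int s) (K (a # mp z))) (comm_words m))"
    using eq lbs unfolding as
    by (intro arg_cong[where f=sum_list] map_cong refl) (auto simp: module.scale_minus_left[OF mi])
  also have "\<dots> = sum_list (map (\<lambda>(s,z). scale (of_int s) (K (mp z @ [a]))) (comm_words m))
      - sum_list (map (\<lambda>(s,z). scale (of_int s) (K (a # mp z))) (comm_words m))"
    by (rule sum_list_diff_prod)
  also have "\<dots> = fev (\<lambda>v. K (v @ [a])) (fCl (map fsingle bs)) - fev (\<lambda>v. K (a # v)) (fCl (map fsingle bs))"
    using Suc.IH[OF lbs, of "\<lambda>v. K (v @ [a])"] Suc.IH[OF lbs, of "\<lambda>v. K (a # v)"] unfolding mp_def by simp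
  also have "\<dots> = fev K (fCl (map fsingle as))"
  proof -
    have "bs \<noteq> []" using lbs Suc.hyps by auto
    then show ?thesis unfolding as by (simp add: fCl_snoc fev_comm fev_diff_fun fsingle_def)
  qed
  finally show ?case .
qed



definition Pm :: "nat \<Rightarrow> ('a list \<Rightarrow> 'a) \<Rightarrow> 'a list \<Rightarrow> 'a" where
  "Pm n mu ws = mu (mu (take n ws) # drop n ws)"

lemma ta_shift:
  assumes TA: "totally_associative n mu" and len: "length as = 2*n-1"
  shows "p \<le> n-1 \<Longrightarrow> mu (take p as @ [mu (take n (drop p as))] @ drop (p+n) as) = Pm n mu as"
proof (induction p)
  case 0 then show ?case by (simp add: Pm_def)
next
  case (Suc p)
  have "p + 2 \<le> n" using Suc.prems by simp
  then have "mu (take p as @ [mu (take n (drop p as))] @ drop (p + n) as) =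
        mu (take (Suc p) as @ [mu (take n (drop (Suc p) as))] @ drop (Suc p + n) as)"
    using TA len unfolding totally_associative_def by blast
  then show ?case using Suc by simp
qed

lemma ta_word:
  assumes TA: "totally_associative n mu" and "length z = n" "length pre + length suf = n - 1" "1 \<le> n"
  shows "mu (pre @ mu z # suf) = Pm n mu (pre @ z @ suf)"
proof -
  have "mu (take (length pre) (pre @ z @ suf) @ [mu (take n (drop (length pre) (pre @ z @ suf)))]
      @ drop (length pre + n) (pre @ z @ suf)) = Pm n mu (pre @ z @ suf)"
    by (rule ta_shift[OF TA]) (use assms in auto)
  then show ?thesis using assms by simp
qed

lemma natural:
  assumes add: "\<And>x y. f (x+y) = f x + f y"
  shows "f (fev K F) = (fev (\<lambda>w. f (K w)) F :: 'a::ab_group_add)"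
proof -
  have z: "f 0 = 0" using add[of 0 0] by simp
  have m: "f (- x) = - f x" for x
  proof -
    have "f x + f (-x) = 0" using add[of x "-x"] z by simp
    then show ?thesis by (metis neg_eq_iff_add_eq_0)
  qed
  show ?thesis by (induction F) (auto simp: z m add)
qed

lemma ml_add:
  assumes "multilinear scale n mu" "length pre + length suf + 1 = n"
  shows "mu (pre @ (x+y) # suf) = mu (pre @ x # suf) + mu (pre @ y # suf)"
proof -
  from assms(1) have h: "\<And>as i x y. length as = n \<Longrightarrow> i < n \<Longrightarrow> mu (as[i := x + y]) = mu (as[i := x]) + mu (as[i := y])"
    unfolding multilinear_def by blast
  have "mu ((pre @ x # suf)[length pre := x + y]) = mu ((pre @ x # suf)[length pre := x]) + mu ((pre @ x # suf)[length pre := y])"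
    by (rule h) (use assms(2) in auto)
  then show ?thesis by (simp add: list_update_append)
qed

lemma map_nonone: "None \<notin> set xs \<Longrightarrow> (\<And>a. \<phi> (Some a) = fsingle a) \<Longrightarrow> map \<phi> xs = map fsingle (map the xs)"
  by (induction xs) (auto, metis option.collapse)

lemma subst_lemma:
  fixes mu :: "'a::ab_group_add list \<Rightarrow> 'a"
  assumes hML: "multilinear scale n mu" and TA: "totally_associative n mu" and n: "2 \<le> n"
    and las: "length as = n" and i: "i < n" and lgs: "length gs = n"
  shows "fev mu (fCl (map fsingle (as[i := fev mu (fCl (map fsingle gs))])))
       = fev (Pm n mu) (fCl ((map fsingle as)[i := fCl (map fsingle gs)]))"
proof -
  define G where "G = fCl (map fsingle gs)"
  define Y where "Y = fev mu G"
  define bs where "bs = (map Some as)[i := None]"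
  define \<phi>Y where "\<phi>Y = (\<lambda>c. case c of Some a \<Rightarrow> fsingle a | None \<Rightarrow> fsingle Y)"
  define \<phi>G where "\<phi>G = (\<lambda>c. case c of Some a \<Rightarrow> fsingle a | None \<Rightarrow> G)"
  define C0 where "C0 = fCl (map fsingle bs)"
  have lbs: "length bs = n" using las by (simp add: bs_def)
  have bsne: "bs \<noteq> []" using lbs n by auto
  have e1: "map fsingle (as[i := Y]) = map \<phi>Y bs"
    unfolding bs_def \<phi>Y_def by (simp add: map_update o_def)
  have e2: "(map fsingle as)[i := G] = map \<phi>G bs"
    unfolding bs_def \<phi>G_def by (simp add: map_update o_def)
  have homeq: "fev K (fCl (map \<phi> bs)) = fev K (fhom \<phi> C0)" for \<phi> :: "'a option \<Rightarrow> 'a fsum" and K :: "'a list \<Rightarrow> 'a"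
  proof -
    have "fev K (fCl (map \<phi> bs)) = fev K (fCl (map (fhom \<phi>) (map fsingle bs)))"
      by (rule Cl_cong) (auto simp: hom_single)
    also have "\<dots> = fev K (fhom \<phi> C0)" unfolding C0_def using bsne by (simp add: hom_Cl)
    finally show ?thesis .
  qed
  have Gw: "length z = n" if "(t,z) \<in> set G" for t z
  proof -
    have "gs \<noteq> []" using lgs n by auto
    then have "mset z = mset gs" using Cl_mset[of gs t z] that unfolding G_def by blast
    then show ?thesis using lgs by (metis size_mset)
  qed
  have key: "fev mu (fprod (map \<phi>Y w)) = fev (Pm n mu) (fprod (map \<phi>G w))" if sw: "(s,w) \<in> set C0" for s w
  proof -
    have mw: "mset w = mset bs" using Cl_mset[OF bsne] sw unfolding C0_def by blast
    have cb: "count (mset bs) None = 1"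
      unfolding bs_def using i las by (simp add: mset_update count_eq_zero_iff)
    then have "None \<in> set w" using mw by (metis count_mset_0_iff zero_neq_one set_mset_mset count_eq_zero_iff)
    then obtain pre' suf' where w: "w = pre' @ None # suf'" and np: "None \<notin> set pre'"
      using split_list_first by metis
    have ns: "None \<notin> set suf'"
    proof
      assume "None \<in> set suf'"
      then have c: "count (mset suf') None > 0" by simp
      have "count (mset w) None = count (mset pre') None + count (mset suf') None + 1" unfolding w by simp
      then have "count (mset w) None \<ge> 2" using c by linarith
      then show False using mw cb by simp
    qed
    define pre where "pre = map the pre'"
    define suf where "suf = map the suf'"
    have lw: "length pre + length suf = n - 1"
      using mw lbs unfolding pre_def suf_def w by (metis size_mset length_append length_Cons length_map diff_Suc_1 add_Suc_right)
    have mY: "map \<phi>Y w = map fsingle (pre @ Y # suf)"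
      unfolding w pre_def suf_def using np ns
      by (auto simp: \<phi>Y_def split: option.split)
    have mG: "map \<phi>G w = map fsingle pre @ [G] @ map fsingle suf"
      unfolding w pre_def suf_def using np ns
      by (auto simp: \<phi>G_def split: option.split)
    have "fev mu (fprod (map \<phi>Y w)) = mu (pre @ fev mu G # suf)"
      unfolding mY Y_def by (rule fprod_singles)
    also have "\<dots> = fev (\<lambda>z. mu (pre @ mu z # suf)) G"
      by (rule natural) (rule ml_add[OF hML], use lw n in simp)
    also have "\<dots> = fev (\<lambda>z. Pm n mu (pre @ z @ suf)) G"
      by (rule fev_cong) (rule ta_word[OF TA], use Gw lw n in auto)
    also have "\<dots> = fev (Pm n mu) (fprod (map \<phi>G w))"
      unfolding mG by (simp add: fprod_append fev_mult fprod_singles)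
    finally show ?thesis .
  qed
  have "fev mu (fCl (map fsingle (as[i := fev mu G]))) = fev mu (fhom \<phi>Y C0)"
    using e1 homeq unfolding Y_def by simp
  also have "\<dots> = fev (Pm n mu) (fhom \<phi>G C0)"
    by (simp add: fev_hom) (rule fev_cong, rule key)
  also have "\<dots> = fev (Pm n mu) (fCl ((map fsingle as)[i := G]))"
    using e2 homeq by simp
  finally show ?thesis unfolding G_def .
qed



theorem corollary4p6:
  fixes scale :: "'k::field_char_0 \<Rightarrow> 'a::ab_group_add \<Rightarrow> 'a"
    and n :: nat and mu :: "'a list \<Rightarrow> 'a"
  assumes "vector_space scale"
    and "2 \<le> n"
    and "multilinear scale n mu"
    and "totally_associative n mu"
  shows "nambu n (n_commutator scale n mu)"
  unfolding nambu_def
proof (intro allI impI, elim conjE)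
  fix xs ys :: "'a list"
  assume lx: "length xs = n - 1" and ly: "length ys = n"
  note vs = assms(1) and n = assms(2) and hML = assms(3) and TA = assms(4)
  define br where "br = n_commutator scale n mu"
  define P where "P = Pm n mu"
  have brl: "br bs = fev mu (fCl (map fsingle bs))" if "length bs = n" for bs
    unfolding br_def n_commutator_def using link[OF vs n that] .
  have xne: "xs \<noteq> []" using lx n by auto
  define X where "X = fCl (map fsingle xs)"
  have "br (xs @ [br ys]) = fev mu (fCl (map fsingle ((xs @ [hd ys])[n - 1 := fev mu (fCl (map fsingle ys))])))"
    using lx n brl[OF ly] brl[of "xs @ [br ys]"] by (simp add: list_update_append)
  also have "\<dots> = fev P (fCl ((map fsingle (xs @ [hd ys]))[n - 1 := fCl (map fsingle ys)]))"
    unfolding P_def by (rule subst_lemma[OF hML TA n]) (use lx n ly in auto)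
  also have "\<dots> = fev P (fcomm X (fCl (map fsingle ys)))"
    using lx xne unfolding X_def by (simp add: list_update_append fCl_snoc)
  also have "\<dots> = (\<Sum>i<n. fev P (fCl ((map fsingle ys)[i := fcomm X ((map fsingle ys)!i)])))"
  proof -
    have "ys \<noteq> []" using ly n by auto
    then show ?thesis using deriv[of "map fsingle ys" P X] ly by simp
  qed
  also have "\<dots> = (\<Sum>i<n. br (ys[i := br (xs @ [ys ! i])]))"
  proof (rule sum.cong)
    fix i assume "i \<in> {..<n}"
    then have i: "i < n" by simp
    have "br (ys[i := br (xs @ [ys ! i])]) = fev mu (fCl (map fsingle (ys[i := fev mu (fCl (map fsingle (xs @ [ys ! i])))])))"
      using lx ly n i brl by simp
    also have "\<dots> = fev P (fCl ((map fsingle ys)[i := fCl (map fsingle (xs @ [ys ! i]))]))"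
      unfolding P_def by (rule subst_lemma[OF hML TA n]) (use lx n ly i in auto)
    also have "\<dots> = fev P (fCl ((map fsingle ys)[i := fcomm X ((map fsingle ys)!i)]))"
      using xne i ly unfolding X_def by (simp add: fCl_snoc)
    finally show "fev P (fCl ((map fsingle ys)[i := fcomm X ((map fsingle ys)!i)])) = br (ys[i := br (xs @ [ys ! i])])" by simp
  qed simp
  finally show "n_commutator scale n mu (xs @ [n_commutator scale n mu ys]) =
        (\<Sum>i<n. n_commutator scale n mu (ys[i := n_commutator scale n mu (xs @ [ys ! i])]))"
    unfolding br_def .
qed

end
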